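(* Let $A\in\mathbb{R}^{n\times n}$, $V=\{v_1,\ldots,v_n\}$, $T>0$ and $\epsilon>0$. For $S\subset V$ let $B(S)=\mathrm{diag}(\mathbf{1}(S))$, let $W_T(S)=\int_0^T e^{A\tau}B(S)B(S)^\top e^{A^\top\tau}\,d\tau$, and let $F(S)=\mathrm{tr}\big((W_T(S)+\epsilon I)^{-1}\big)$. Then $F$ is strictly decreasing: for all $S_1\subsetneqq S_2\subset V$, $F(S_2)<F(S_1)$.
   Context: $\mathbf{1}(S)\in\mathbb{R}^n$ is the vector whose $i$th entry is $1$ if $v_i\in S$ and $0$ otherwise, so $B(S)$ is the diagonal $0/1$ matrix selecting the coordinates indexed by $S$; this corresponds to the control system $\dot x=Ax+B(S)u$. $W_T(S)$ is its controllability Gramian on $[0,T]$. *)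

theory Defs
  imports "HOL-Analysis.Analysis"
begin

fun mat_pow :: "real^'n^'n \<Rightarrow> nat \<Rightarrow> real^'n^'n" where
  "mat_pow M 0 = mat 1"
| "mat_pow M (Suc k) = M ** mat_pow M k"

definition mat_exp :: "real^'n^'n \<Rightarrow> real^'n^'n" where
  "mat_exp M = (\<Sum>k. (1 / fact k) *\<^sub>R mat_pow M k)"

definition sel_mat :: "'n set \<Rightarrow> real^'n^'n" where
  "sel_mat S = (\<chi> i j. if i = j \<and> i \<in> S then 1 else 0)"

definition gramian :: "real^'n^'n \<Rightarrow> real \<Rightarrow> 'n set \<Rightarrow> real^'n^'n" where
  "gramian A T S = integral {0..T}
     (\<lambda>\<tau>. mat_exp (\<tau> *\<^sub>R A) ** sel_mat S ** transpose (sel_mat S) ** mat_exp (\<tau> *\<^sub>R transpose A))"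

definition Fobj :: "real^'n^'n \<Rightarrow> real \<Rightarrow> real \<Rightarrow> 'n set \<Rightarrow> real" where
  "Fobj A T \<epsilon> S = trace (matrix_inv (gramian A T S + \<epsilon> *\<^sub>R mat 1))"

end

theory Submission
  imports Defs
begin


definition L1 :: "real^'n^'n \<Rightarrow> real" where
  "L1 M = (\<Sum>i\<in>UNIV. \<Sum>j\<in>UNIV. \<bar>M$i$j\<bar>)"

lemma L1_nonneg: "0 \<le> L1 M"
  unfolding L1_def by (intro sum_nonneg) auto

lemma norm_le_L1: "norm (M::real^'n^'n) \<le> L1 M"
proof -
  have "norm M \<le> (\<Sum>i\<in>UNIV. norm (M$i))" unfolding norm_vec_def by (rule L2_set_le_sum) auto
  also have "\<dots> \<le> (\<Sum>i\<in>UNIV. \<Sum>j\<in>UNIV. \<bar>M$i$j\<bar>)"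
    by (intro sum_mono norm_le_l1_cart)
  finally show ?thesis unfolding L1_def .
qed

lemma L1_mult: "L1 ((X::real^'n^'n) ** Y) \<le> L1 X * L1 Y"
proof -
  have "L1 (X ** Y) = (\<Sum>i\<in>UNIV. \<Sum>j\<in>UNIV. \<bar>\<Sum>k\<in>UNIV. X$i$k * Y$k$j\<bar>)"
    unfolding L1_def by (simp add: matrix_matrix_mult_def)
  also have "\<dots> \<le> (\<Sum>i\<in>UNIV. \<Sum>j\<in>UNIV. \<Sum>k\<in>UNIV. \<bar>X$i$k\<bar> * \<bar>Y$k$j\<bar>)"
    by (intro sum_mono) (metis (no_types, lifting) abs_mult sum_abs sum.cong)
  also have "\<dots> = (\<Sum>i\<in>UNIV. \<Sum>k\<in>UNIV. \<bar>X$i$k\<bar> * (\<Sum>j\<in>UNIV. \<bar>Y$k$j\<bar>))"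
    by (rule sum.cong[OF refl], subst sum.swap, simp add: sum_distrib_left)
  also have "\<dots> \<le> (\<Sum>i\<in>UNIV. \<Sum>k\<in>UNIV. \<bar>X$i$k\<bar> * L1 Y)"
  proof (intro sum_mono mult_left_mono)
    fix k
    show "(\<Sum>j\<in>UNIV. \<bar>Y$k$j\<bar>) \<le> L1 Y"
      unfolding L1_def by (rule member_le_sum[of k UNIV "\<lambda>k. \<Sum>j\<in>UNIV. \<bar>Y$k$j\<bar>"]) (auto intro: sum_nonneg)
  qed auto
  also have "\<dots> = L1 X * L1 Y"
    unfolding L1_def by (simp add: sum_distrib_right)
  finally show ?thesis .
qed

lemma L1_pow: "L1 (mat_pow M k) \<le> real CARD('n) * L1 (M::real^'n^'n) ^ k"
proof (induction k)
  case 0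
  have "L1 (mat 1 :: real^'n^'n) = real CARD('n)"
    unfolding L1_def by (simp add: mat_def if_distrib sum.delta cong: if_cong)
  then show ?case by simp
next
  case (Suc k)
  have "L1 (mat_pow M (Suc k)) \<le> L1 M * L1 (mat_pow M k)" by (simp add: L1_mult)
  also have "\<dots> \<le> L1 M * (real CARD('n) * L1 M ^ k)"
    by (intro mult_left_mono Suc L1_nonneg)
  finally show ?case by (simp add: algebra_simps)
qed

lemma mat_pow_scale: "mat_pow (c *\<^sub>R M) k = c^k *\<^sub>R mat_pow M k"
  by (induction k) (simp_all add: matrix_scalar_ac scalar_matrix_assoc mult.commute)

lemma exp_term_bound:
  "norm ((1 / fact k) *\<^sub>R mat_pow (M::real^'n^'n) k) \<le> real CARD('n) * (L1 M ^ k /\<^sub>R fact k)"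
proof -
  have "norm ((1 / fact k) *\<^sub>R mat_pow M k) = norm (mat_pow M k) / fact k" by simp
  also have "\<dots> \<le> real CARD('n) * L1 M ^ k / fact k"
    by (intro divide_right_mono order.trans[OF norm_le_L1 L1_pow]) auto
  finally show ?thesis by (simp add: divide_inverse ac_simps)
qed

lemma summable_exp_series: "summable (\<lambda>k. (1 / fact k) *\<^sub>R mat_pow (M::real^'n^'n) k)"
  by (rule summable_comparison_test'[OF summable_mult[OF summable_exp_generic] exp_term_bound])

lemma mat_pow_comm: "mat_pow M k ** M = M ** mat_pow M k"
  by (induction k) (simp_all, metis matrix_mul_assoc)

lemma transpose_mat_pow: "transpose (mat_pow M k) = mat_pow (transpose M) k"
  by (induction k) (simp_all add: matrix_transpose_mul mat_pow_comm transpose_mat)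

lemma linear_transpose: "linear (transpose :: real^'n^'m \<Rightarrow> real^'m^'n)"
  by (rule linearI) (simp_all add: transpose_def vec_eq_iff)

lemma transpose_mat_exp: "transpose (mat_exp M) = mat_exp (transpose (M::real^'n^'n))"
  unfolding mat_exp_def
  by (subst bounded_linear.suminf[OF linear_transpose[unfolded linear_conv_bounded_linear] summable_exp_series])
     (simp add: transpose_scalar transpose_mat_pow)

lemma mat_exp_zero: "mat_exp (0::real^'n^'n) = mat 1"
  unfolding mat_exp_def
proof (subst suminf_finite[of "{0}"])
  fix k :: nat assume "k \<notin> {0}"
  then obtain m where "k = Suc m" by (cases k) auto
  then show "(1 / fact k) *\<^sub>R mat_pow (0::real^'n^'n) k = 0" by simp
qed auto

lemma continuous_mat_exp:
  "continuous_on {0..T} (\<lambda>\<tau>::real. mat_exp (\<tau> *\<^sub>R (M::real^'n^'n)))"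
proof -
  define f where "f = (\<lambda>k (\<tau>::real). (1 / fact k) *\<^sub>R mat_pow (\<tau> *\<^sub>R M) k)"
  have ul: "uniform_limit {0..T} (\<lambda>n x. \<Sum>i<n. f i x) (\<lambda>x. \<Sum>i. f i x) sequentially"
  proof (rule Weierstrass_m_test)
    fix n and x :: real assume x: "x \<in> {0..T}"
    have "norm (f n x) \<le> real CARD('n) * (L1 (x *\<^sub>R M) ^ n /\<^sub>R fact n)"
      unfolding f_def by (rule exp_term_bound)
    also have "\<dots> \<le> real CARD('n) * ((T * L1 M) ^ n /\<^sub>R fact n)"
    proof -
      have "L1 (x *\<^sub>R M) = \<bar>x\<bar> * L1 M" unfolding L1_def by (simp add: abs_mult sum_distrib_left)
      also have "\<dots> \<le> T * L1 M" using x by (intro mult_right_mono L1_nonneg) auto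
      finally have "L1 (x *\<^sub>R M) ^ n \<le> (T * L1 M) ^ n" by (intro power_mono L1_nonneg)
      then show ?thesis by (intro mult_left_mono) (auto simp: divide_right_mono)
    qed
    finally show "norm (f n x) \<le> real CARD('n) * ((T * L1 M) ^ n /\<^sub>R fact n)" .
  next
    show "summable (\<lambda>n. real CARD('n) * ((T * L1 M) ^ n /\<^sub>R fact n))"
      by (intro summable_mult summable_exp_generic)
  qed
  have "continuous_on {0..T} (\<lambda>x. \<Sum>i. f i x)"
  proof (rule uniform_limit_theorem[OF _ ul])
    show "\<forall>\<^sub>F n in sequentially. continuous_on {0..T} (\<lambda>x. \<Sum>i<n. f i x)"
      unfolding f_def mat_pow_scale by (intro always_eventually allI continuous_intros)
  qed simp
  then show ?thesis unfolding f_def mat_exp_def .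
qed



lemma matrix_add_rdistrib': "((A::real^'n^'n) + B) ** C = A ** C + B ** C"
  by (simp add: matrix_matrix_mult_def vec_eq_iff distrib_right sum.distrib)

lemma bilinear_mm: "bilinear (\<lambda>(X::real^'n^'n) (Y::real^'n^'n). X ** Y)"
  unfolding bilinear_def
  by (auto intro!: linearI simp: matrix_add_ldistrib matrix_add_rdistrib' matrix_scalar_ac scalar_matrix_assoc)

lemma bb_mm: "bounded_bilinear (\<lambda>(X::real^'n^'n) (Y::real^'n^'n). X ** Y)"
  using bilinear_mm bilinear_conv_bounded_bilinear by blast

lemma bl_form: "bounded_linear (\<lambda>M::real^'n^'n. x \<bullet> (M *v y))"
  unfolding linear_conv_bounded_linear[symmetric]
  by (rule linearI) (simp_all add: matrix_vector_mult_add_rdistrib inner_add_right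
      matrix_vector_mult_def vec_eq_iff inner_vec_def sum_distrib_left algebra_simps sum.distrib scalar_mult_eq_scaleR)

lemma bl_mv: "bounded_linear (\<lambda>M::real^'n^'n. M *v y)"
  unfolding linear_conv_bounded_linear[symmetric]
  by (rule linearI) (simp_all add: matrix_vector_mult_add_rdistrib
      matrix_vector_mult_def vec_eq_iff sum_distrib_left algebra_simps sum.distrib)

definition Eg :: "real^'n^'n \<Rightarrow> real \<Rightarrow> real^'n^'n" where
  "Eg A \<tau> = mat_exp (\<tau> *\<^sub>R A)"

lemma cont_integrand:
  "continuous_on {0..T} (\<lambda>\<tau>. mat_exp (\<tau> *\<^sub>R A) ** sel_mat S ** transpose (sel_mat S) ** mat_exp (\<tau> *\<^sub>R transpose A))"
  by (intro bounded_bilinear.continuous_on[OF bb_mm] continuous_mat_exp continuous_on_const)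

lemma gram_form:
  fixes A :: "real^'n^'n"
  shows "x \<bullet> (gramian A T S *v y) = integral {0..T} (\<lambda>\<tau>.
     ((transpose (sel_mat S) ** mat_exp (\<tau> *\<^sub>R transpose A)) *v x) \<bullet>
     ((transpose (sel_mat S) ** mat_exp (\<tau> *\<^sub>R transpose A)) *v y))"
proof -
  define F where "F = (\<lambda>\<tau>. mat_exp (\<tau> *\<^sub>R A) ** sel_mat S ** transpose (sel_mat S) ** mat_exp (\<tau> *\<^sub>R transpose A))"
  have int: "F integrable_on {0..T}"
    unfolding F_def by (intro integrable_continuous_interval cont_integrand)
  have "x \<bullet> (gramian A T S *v y) = integral {0..T} ((\<lambda>M. x \<bullet> (M *v y)) \<circ> F)"
    unfolding gramian_def F_def[symmetric] by (rule integral_linear[OF int bl_form, symmetric])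
  also have "\<dots> = integral {0..T} (\<lambda>\<tau>.
     ((transpose (sel_mat S) ** mat_exp (\<tau> *\<^sub>R transpose A)) *v x) \<bullet>
     ((transpose (sel_mat S) ** mat_exp (\<tau> *\<^sub>R transpose A)) *v y))"
  proof (rule integral_cong)
    fix \<tau> :: real
    define E where "E = mat_exp (\<tau> *\<^sub>R A)"
    define P where "P = sel_mat S"
    have E': "mat_exp (\<tau> *\<^sub>R transpose A) = transpose E"
      unfolding E_def by (simp add: transpose_mat_exp transpose_scalar)
    have "x \<bullet> (F \<tau> *v y) = x \<bullet> ((E ** P) *v ((transpose P ** transpose E) *v y))"
      unfolding F_def E' E_def[symmetric] P_def[symmetric] by (simp add: matrix_vector_mul_assoc matrix_mul_assoc)
    also have "\<dots> = (x v* (E ** P)) \<bullet> ((transpose P ** transpose E) *v y)"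
      by (simp add: dot_lmul_matrix)
    also have "\<dots> = ((transpose P ** transpose E) *v x) \<bullet> ((transpose P ** transpose E) *v y)"
      by (metis vector_transpose_matrix transpose_transpose matrix_transpose_mul)
    finally show "((\<lambda>M. x \<bullet> (M *v y)) \<circ> F) \<tau> = ((transpose (sel_mat S) ** mat_exp (\<tau> *\<^sub>R transpose A)) *v x) \<bullet>
     ((transpose (sel_mat S) ** mat_exp (\<tau> *\<^sub>R transpose A)) *v y)"
      unfolding E' P_def by simp
  qed
  finally show ?thesis .
qed



lemma pd_inv:
  fixes M :: "real^'n^'n"
  assumes pd: "\<And>x. x \<noteq> 0 \<Longrightarrow> 0 < x \<bullet> (M *v x)"
  shows "M ** matrix_inv M = mat 1 \<and> matrix_inv M ** M = mat 1"
proof -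
  have "\<forall>x. M *v x = 0 \<longrightarrow> x = 0"
    using pd by (metis inner_zero_right less_irrefl)
  then obtain B where B: "B ** M = mat 1" using matrix_left_invertible_ker by blast
  then have "M ** B = mat 1" using matrix_left_right_inverse by blast
  with B have "\<exists>A'. M ** A' = mat 1 \<and> A' ** M = mat 1" by blast
  then show ?thesis unfolding matrix_inv_def by (rule someI_ex)
qed

lemma col_entry: "((N::real^'n^'n) *v axis i 1) $ k = N $ k $ i"
  by (simp add: matrix_vector_mult_def axis_def if_distrib sum.delta cong: if_cong)

lemma diag_entry: "(N::real^'n^'n) $ i $ i = axis i 1 \<bullet> (N *v axis i 1)"
  by (simp add: inner_commute[of "axis i 1"] inner_axis col_entry)

lemma trace_strict:
  fixes M1 M2 :: "real^'n^'n"
  assumes sym1: "\<And>x y. x \<bullet> (M1 *v y) = y \<bullet> (M1 *v x)"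
  and pd1: "\<And>x. x \<noteq> 0 \<Longrightarrow> 0 < x \<bullet> (M1 *v x)"
  and pd2: "\<And>x. x \<noteq> 0 \<Longrightarrow> 0 < x \<bullet> (M2 *v x)"
  and psd: "\<And>x. 0 \<le> x \<bullet> ((M2 - M1) *v x)"
  and strict: "\<And>x. x $ j \<noteq> 0 \<Longrightarrow> 0 < x \<bullet> ((M2 - M1) *v x)"
  shows "trace (matrix_inv M2) < trace (matrix_inv M1)"
proof -
  define N1 where "N1 = matrix_inv M1"
  define N2 where "N2 = matrix_inv M2"
  have I1: "M1 ** N1 = mat 1" using pd_inv[OF pd1] N1_def by blast
  have I2: "M2 ** N2 = mat 1" "N2 ** M2 = mat 1" using pd_inv[OF pd2] N2_def by blast+
  define e where "e = (\<lambda>i. axis i (1::real) :: real^'n)"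
  define y where "y = (\<lambda>i. N2 *v e i)"
  define z where "z = (\<lambda>i. N1 *v e i)"
  define D where "D = (\<lambda>i. y i \<bullet> ((M2 - M1) *v y i))"
  have key: "e i \<bullet> y i + D i \<le> e i \<bullet> z i" for i
  proof -
    have My: "M2 *v y i = e i" unfolding y_def by (simp add: matrix_vector_mul_assoc I2)
    have Mz: "M1 *v z i = e i" unfolding z_def by (simp add: matrix_vector_mul_assoc I1)
    have a: "e i \<bullet> y i = y i \<bullet> (M1 *v y i) + D i"
      unfolding D_def by (simp add: matrix_vector_mult_diff_rdistrib inner_diff_right My inner_commute)
    have "0 \<le> (y i - z i) \<bullet> (M1 *v (y i - z i))"
      using pd1[of "y i - z i"] by (cases "y i - z i = 0") auto
    also have "\<dots> = y i \<bullet> (M1 *v y i) - y i \<bullet> (M1 *v z i) - z i \<bullet> (M1 *v y i) + z i \<bullet> (M1 *v z i)"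
      by (simp add: matrix_vector_right_distrib inner_diff_left inner_diff_right matrix_vector_mult_diff_distrib)
    also have "\<dots> = y i \<bullet> (M1 *v y i) - 2 * (y i \<bullet> e i) + z i \<bullet> e i"
      using sym1[of "z i" "y i"] Mz by simp
    finally show ?thesis using a by (simp add: inner_commute)
  qed
  have tr: "trace N = (\<Sum>i\<in>UNIV. e i \<bullet> (N *v e i))" for N :: "real^'n^'n"
    unfolding trace_def e_def by (simp add: diag_entry)
  obtain i0 where i0: "N2 $ j $ i0 \<noteq> 0"
  proof -
    have "(N2 ** M2) $ j $ j = 1" using I2 by (simp add: mat_def)
    then have "(\<Sum>k\<in>UNIV. N2 $ j $ k * M2 $ k $ j) \<noteq> 0" by (simp add: matrix_matrix_mult_def)
    then show ?thesis using that by (metis (no_types, lifting) mult_eq_0_iff sum.neutral)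
  qed
  have "0 < (\<Sum>i\<in>UNIV. D i)"
  proof (rule sum_pos2[of UNIV i0])
    show "0 < D i0" unfolding D_def y_def e_def by (rule strict) (simp add: col_entry i0)
    show "\<And>i. i \<in> UNIV \<Longrightarrow> 0 \<le> D i" unfolding D_def by (rule psd)
  qed auto
  moreover have "(\<Sum>i\<in>UNIV. e i \<bullet> y i + D i) \<le> (\<Sum>i\<in>UNIV. e i \<bullet> z i)"
    by (intro sum_mono key)
  ultimately have "(\<Sum>i\<in>UNIV. e i \<bullet> y i) < (\<Sum>i\<in>UNIV. e i \<bullet> z i)"
    by (simp add: sum.distrib)
  then show ?thesis unfolding tr y_def z_def N1_def N2_def .
qed



lemma sel_form:
  fixes E :: "real^'n^'n"
  shows "((transpose (sel_mat S) ** E) *v x) \<bullet> ((transpose (sel_mat S) ** E) *v x) = (\<Sum>k\<in>S. ((E *v x) $ k)^2)"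
proof -
  have c: "((transpose (sel_mat S) ** E) *v x) $ k = (if k \<in> S then (E *v x) $ k else 0)" for k
  proof -
    define v where "v = E *v x"
    have "(transpose (sel_mat S) ** E) *v x = transpose (sel_mat S) *v v"
      unfolding v_def by (simp add: matrix_vector_mul_assoc)
    also have "(transpose (sel_mat S) *v v) $ k = (\<Sum>j\<in>UNIV. (if j = k \<and> j \<in> S then 1 else 0) * v $ j)"
      by (simp add: matrix_vector_mult_def transpose_def sel_mat_def)
    also have "\<dots> = (\<Sum>j\<in>UNIV. if j = k then (if k \<in> S then v$j else 0) else 0)"
      by (rule sum.cong) auto
    finally show ?thesis unfolding v_def by simp
  qed
  have "((transpose (sel_mat S) ** E) *v x) \<bullet> ((transpose (sel_mat S) ** E) *v x) =
        (\<Sum>k\<in>UNIV. if k \<in> S then ((E *v x) $ k)^2 else 0)"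
    unfolding inner_vec_def c by (intro sum.cong) (auto simp: power2_eq_square)
  also have "\<dots> = (\<Sum>k\<in>S. ((E *v x) $ k)^2)"
    by (simp add: sum.If_cases)
  finally show ?thesis .
qed

lemma cont_cx: "continuous_on {0..T} (\<lambda>\<tau>. (mat_exp (\<tau> *\<^sub>R (B::real^'n^'n)) *v x) $ k)"
  by (intro continuous_on_component bounded_linear.continuous_on[OF bl_mv] continuous_mat_exp)

lemma quad_form:
  fixes A :: "real^'n^'n"
  shows "x \<bullet> (gramian A T S *v x) = integral {0..T} (\<lambda>\<tau>. \<Sum>k\<in>S. ((mat_exp (\<tau> *\<^sub>R transpose A) *v x) $ k)^2)"
  unfolding gram_form sel_form ..

lemma int_h: "(\<lambda>\<tau>. \<Sum>k\<in>S. ((mat_exp (\<tau> *\<^sub>R transpose (A::real^'n^'n)) *v x) $ k)^2) integrable_on {0..T}"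
  by (intro integrable_continuous_interval continuous_intros cont_cx)

lemma scal_mv: "((c::real) *\<^sub>R mat 1) *v (x::real^'n) = c *\<^sub>R x"
  by (metis scaleR_matrix_vector_assoc matrix_vector_mul_lid)

theorem lemma1:
  fixes A :: "real^'n^'n" and T \<epsilon> :: real and S1 S2 :: "'n set"
  assumes "T > 0" and "\<epsilon> > 0" and "S1 \<subset> S2"
  shows "Fobj A T \<epsilon> S2 < Fobj A T \<epsilon> S1"
proof -
  define M where "M = (\<lambda>S. gramian A T S + \<epsilon> *\<^sub>R mat 1)"
  define h where "h = (\<lambda>S x \<tau>. \<Sum>k\<in>S. ((mat_exp (\<tau> *\<^sub>R transpose A) *v x) $ k)^2)"
  have Mform: "x \<bullet> (M S *v y) = x \<bullet> (gramian A T S *v y) + \<epsilon> * (x \<bullet> y)" for S x y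
    unfolding M_def by (simp add: matrix_vector_mult_add_rdistrib inner_add_right scal_mv)
  have sym: "x \<bullet> (M S *v y) = y \<bullet> (M S *v x)" for S x y
    unfolding Mform gram_form by (simp add: inner_commute)
  have Gnn: "0 \<le> x \<bullet> (gramian A T S *v x)" for S x
    unfolding quad_form by (intro integral_nonneg int_h) (auto intro: sum_nonneg)
  have pd: "0 < x \<bullet> (M S *v x)" if "x \<noteq> 0" for S x
    unfolding Mform using Gnn[of x S] that \<open>\<epsilon> > 0\<close> by (simp add: add_nonneg_pos)
  have diff: "x \<bullet> ((M S2 - M S1) *v x) = integral {0..T} (\<lambda>\<tau>. h S2 x \<tau> - h S1 x \<tau>)" for x
  proof -
    have "x \<bullet> ((M S2 - M S1) *v x) = x \<bullet> (gramian A T S2 *v x) - x \<bullet> (gramian A T S1 *v x)"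
      by (simp add: matrix_vector_mult_diff_rdistrib inner_diff_right Mform)
    also have "\<dots> = integral {0..T} (h S2 x) - integral {0..T} (h S1 x)"
      unfolding quad_form h_def ..
    also have "\<dots> = integral {0..T} (\<lambda>\<tau>. h S2 x \<tau> - h S1 x \<tau>)"
      unfolding h_def by (rule integral_diff[symmetric]) (intro int_h)+
    finally show ?thesis .
  qed
  have hdiff: "h S2 x \<tau> - h S1 x \<tau> = (\<Sum>k\<in>S2 - S1. ((mat_exp (\<tau> *\<^sub>R transpose A) *v x) $ k)^2)" for x \<tau>
    unfolding h_def using \<open>S1 \<subset> S2\<close> by (simp add: sum_diff)
  have psd: "0 \<le> x \<bullet> ((M S2 - M S1) *v x)" for x
    unfolding diff hdiff
    by (intro integral_nonneg integrable_continuous_interval continuous_intros cont_cx) (auto intro: sum_nonneg)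
  obtain j where j: "j \<in> S2 - S1" using \<open>S1 \<subset> S2\<close> by blast
  have strict: "0 < x \<bullet> ((M S2 - M S1) *v x)" if xj: "x $ j \<noteq> 0" for x
  proof -
    define g where "g = (\<lambda>\<tau>. ((mat_exp (\<tau> *\<^sub>R transpose A) *v x) $ j)^2)"
    have gc: "continuous_on {0..T} g" unfolding g_def by (intro continuous_intros cont_cx)
    have gi: "g integrable_on {0..T}" by (rule integrable_continuous_interval[OF gc])
    have le: "integral {0..T} g \<le> x \<bullet> ((M S2 - M S1) *v x)"
      unfolding diff hdiff
    proof (rule integral_le[OF gi])
      show "(\<lambda>\<tau>. \<Sum>k\<in>S2 - S1. ((mat_exp (\<tau> *\<^sub>R transpose A) *v x) $ k)^2) integrable_on {0..T}"
        by (intro integrable_continuous_interval continuous_intros cont_cx)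
      fix \<tau> :: real
      show "g \<tau> \<le> (\<Sum>k\<in>S2 - S1. ((mat_exp (\<tau> *\<^sub>R transpose A) *v x) $ k)^2)"
        unfolding g_def using j
        by (intro member_le_sum[of j "S2 - S1" "\<lambda>k. ((mat_exp (\<tau> *\<^sub>R transpose A) *v x) $ k)^2"]) auto
    qed
    have g0: "g 0 = (x $ j)^2" unfolding g_def by (simp add: mat_exp_zero)
    have "0 < integral {0..T} g"
    proof (rule ccontr)
      assume "\<not> 0 < integral {0..T} g"
      moreover have "0 \<le> integral {0..T} g" by (intro integral_nonneg gi) (simp add: g_def)
      ultimately have "integral {0..T} g = 0" by simp
      then have hi: "(g has_integral 0) (cbox 0 T)" using gi by (simp add: has_integral_integral)
      have "g 0 = 0"
        by (rule has_integral_0_cbox_imp_0[OF _ _ hi]) (use gc \<open>T > 0\<close> in \<open>auto simp: g_def\<close>)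
      with g0 xj show False by simp
    qed
    with le show ?thesis by simp
  qed
  have "trace (matrix_inv (M S2)) < trace (matrix_inv (M S1))"
    by (rule trace_strict[of "M S1" "M S2" j]) (use sym pd psd strict in auto)
  then show ?thesis unfolding Fobj_def M_def .
qed

end
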